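(* Let $A$ be a no-signalling empirical theory (finite set of labels) such that $Op(A)$, equipped with a convex structure, has only perfectly predictable measurements and contains a maximally mixed preparation, and consider only ontological representations that preserve convexity. Then $Op(A)$ is non-contextual if and only if it admits a canonical ontological representation that is non-contextual.
   Context: Operational theory $T=(P,M,D,O)$: preparations $P$, measurements $M$, finite outcome sets $O^m$, distributions $d_{p,m}$ on $O^m$; $p\sim p'$ iff $d_{p,m}=d_{p',m}\ \forall m$; $(m,k)\sim(m',k')$ iff $d_{p,m}(k)=d_{p,m'}(k')\ \forall p$. An ontological representation is $(\Omega,\mu,\xi)$, $\Omega$ countable, $\mu_p$ distributions on $\Omega$, $\xi_m(\lambda)$ distributions on $O^m$, with $\sum_\lambda\xi_m(\lambda)(k)\mu_p(\lambda)=d_{p,m}(k)$ and each $\lambda$ in the support of some $\mu_p$; it is non-contextual if $p\sim p'\Rightarrow\mu_p=\mu_{p'}$ and $(m,k)\sim(m',k')\Rightarrow\xi_m(\lambda)(k)=\xi_{m'}(\lambda)(k')\ \forall\lambda$. $T$ is non-contextual if it has a non-contextual representation. Convex structure: some preparations (resp. measurements with common outcome set) are designated as convex combinations $\sum_ic_ip_i$ (resp. $\sum_ic_im_i$), $c_i>0$, $\sum c_i=1$; a representation preserves convexity if $\mu_{\sum c_ip_i}=\sum c_i\mu_{p_i}$ and $\xi_{\sum c_im_i}(\lambda)=\sum c_i\xi_{m_i}(\lambda)$. A measurement $m$ is perfectly predictable if each $k\in O^m$ has a preparation $p_k$ with $d_{p_k,m}(k')=\delta_{k,k'}$. A preparation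 $p^{mix}$ is maximally mixed if (1) for every preparation $p'$ it is statistically equivalent to a convex combination (positive weights) of preparations including $p'$, and (2) for every perfectly predictable $m$ it is statistically equivalent to a positive-weight convex combination of preparations $p_k$, $k\in O^m$. Empirical theories: fix finite $O$; a system type is a finite set $X$ of labels with a cover $\mathcal M$ (subsets with union $X$, none properly contained in another); jointly measurable $U$ means $U\subseteq C\in\mathcal M$; $O^U$ = functions $U\to O$; a state is a family of distributions $\sigma_C$ on $O^C$, no-signalling if marginals on $C\cap C'$ agree, then $\sigma_U:=\sigma_C|_U$. $A=(X,\mathcal M,S,O)$; a global section is $\{d^\sigma\}$, distributions on $O^X$ with $d^\sigma|_C=\sigma_C$. $\sigma\sim\sigma'$ iff $\sigma_C=\sigma'_C\ \forall C$; $x\sim x'$ iff $\sigma_{\{x\}}=\sigma_{\{x'\}}\ \forall\sigma$. $Op(A)$: preparations $S$, measurements nonempty jointly measurable $U$ with outcome set $O^U$, $d_{\sigma,U}=\sigma_U$. Canonical representation: for a global section $d$ with $d^\sigma(s)=0$ whenever $s(x)\ne s(x')$ for some $x\sim x'$, and $d^\sigma=d^{\sigma'}$ for $\sigma\sim\sigma'$, with quotient $q:X\to X/{\sim}$: $\Omega=\{t:X/{\sim}\to O\}$ (restricted to supports), $\mu_\sigma(t)=d^\sigma(t\circ q)$, $\xi_U(t)(s)=1$ if $s=(t\circ q)|_U$, else $0$. *)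

theory Defs
  imports "HOL-Analysis.Analysis"
begin

text \<open>Preparations P, measurements M, outcome sets Out m, statistics d p m k.\<close>

definition prep_equiv ::
  "'p set \<Rightarrow> 'm set \<Rightarrow> ('m \<Rightarrow> 'k set) \<Rightarrow> ('p \<Rightarrow> 'm \<Rightarrow> 'k \<Rightarrow> real) \<Rightarrow> 'p \<Rightarrow> 'p \<Rightarrow> bool" where
  "prep_equiv P M Out d p p' \<longleftrightarrow> (\<forall>m\<in>M. \<forall>k\<in>Out m. d p m k = d p' m k)"

definition effect_equiv ::
  "'p set \<Rightarrow> 'm set \<Rightarrow> ('m \<Rightarrow> 'k set) \<Rightarrow> ('p \<Rightarrow> 'm \<Rightarrow> 'k \<Rightarrow> real) \<Rightarrow> 'm \<Rightarrow> 'k \<Rightarrow> 'm \<Rightarrow> 'k \<Rightarrow> bool" where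
  "effect_equiv P M Out d m k m' k' \<longleftrightarrow> (\<forall>p\<in>P. d p m k = d p m' k')"

definition ontological_rep ::
  "'p set \<Rightarrow> 'm set \<Rightarrow> ('m \<Rightarrow> 'k set) \<Rightarrow> ('p \<Rightarrow> 'm \<Rightarrow> 'k \<Rightarrow> real)
   \<Rightarrow> 'l set \<Rightarrow> ('p \<Rightarrow> 'l \<Rightarrow> real) \<Rightarrow> ('m \<Rightarrow> 'l \<Rightarrow> 'k \<Rightarrow> real) \<Rightarrow> bool" where
  "ontological_rep P M Out d \<Omega> \<mu> \<xi> \<longleftrightarrow>
     countable \<Omega> \<and>
     (\<forall>p\<in>P. (\<forall>l. 0 \<le> \<mu> p l) \<and> (\<forall>l. l \<notin> \<Omega> \<longrightarrow> \<mu> p l = 0) \<and> (\<mu> p has_sum 1) \<Omega>) \<and>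
     (\<forall>m\<in>M. \<forall>l\<in>\<Omega>. (\<forall>k. 0 \<le> \<xi> m l k) \<and> (\<forall>k. k \<notin> Out m \<longrightarrow> \<xi> m l k = 0)
                     \<and> sum (\<xi> m l) (Out m) = 1) \<and>
     (\<forall>p\<in>P. \<forall>m\<in>M. \<forall>k\<in>Out m. ((\<lambda>l. \<xi> m l k * \<mu> p l) has_sum d p m k) \<Omega>) \<and>
     (\<forall>l\<in>\<Omega>. \<exists>p\<in>P. 0 < \<mu> p l)"

definition noncontextual_rep ::
  "'p set \<Rightarrow> 'm set \<Rightarrow> ('m \<Rightarrow> 'k set) \<Rightarrow> ('p \<Rightarrow> 'm \<Rightarrow> 'k \<Rightarrow> real)
   \<Rightarrow> 'l set \<Rightarrow> ('p \<Rightarrow> 'l \<Rightarrow> real) \<Rightarrow> ('m \<Rightarrow> 'l \<Rightarrow> 'k \<Rightarrow> real) \<Rightarrow> bool" where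
  "noncontextual_rep P M Out d \<Omega> \<mu> \<xi> \<longleftrightarrow>
     (\<forall>p\<in>P. \<forall>p'\<in>P. prep_equiv P M Out d p p' \<longrightarrow> \<mu> p = \<mu> p') \<and>
     (\<forall>m\<in>M. \<forall>k\<in>Out m. \<forall>m'\<in>M. \<forall>k'\<in>Out m'. effect_equiv P M Out d m k m' k' \<longrightarrow>
        (\<forall>l\<in>\<Omega>. \<xi> m l k = \<xi> m' l k'))"

text \<open>Convex structure: designated convex combinations, given as lists of
  (weight, component) pairs with positive weights summing to 1.\<close>

definition convex_structure ::
  "'p set \<Rightarrow> 'm set \<Rightarrow> ('m \<Rightarrow> 'k set) \<Rightarrow> ('p \<times> (real \<times> 'p) list) set \<Rightarrow> ('m \<times> (real \<times> 'm) list) set \<Rightarrow> bool" where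
  "convex_structure P M Out CP CM \<longleftrightarrow>
     (\<forall>(p, cs)\<in>CP. p \<in> P \<and> cs \<noteq> [] \<and> (\<forall>(c, q)\<in>set cs. 0 < c \<and> q \<in> P)
                    \<and> sum_list (map fst cs) = 1) \<and>
     (\<forall>(m, cs)\<in>CM. m \<in> M \<and> cs \<noteq> [] \<and> (\<forall>(c, m')\<in>set cs. 0 < c \<and> m' \<in> M \<and> Out m' = Out m)
                    \<and> sum_list (map fst cs) = 1)"

definition preserves_convexity ::
  "('m \<Rightarrow> 'k set) \<Rightarrow> ('p \<times> (real \<times> 'p) list) set \<Rightarrow> ('m \<times> (real \<times> 'm) list) set
   \<Rightarrow> 'l set \<Rightarrow> ('p \<Rightarrow> 'l \<Rightarrow> real) \<Rightarrow> ('m \<Rightarrow> 'l \<Rightarrow> 'k \<Rightarrow> real) \<Rightarrow> bool" where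
  "preserves_convexity Out CP CM \<Omega> \<mu> \<xi> \<longleftrightarrow>
     (\<forall>(p, cs)\<in>CP. \<forall>l. \<mu> p l = (\<Sum>(c, q)\<leftarrow>cs. c * \<mu> q l)) \<and>
     (\<forall>(m, cs)\<in>CM. \<forall>l\<in>\<Omega>. \<forall>k\<in>Out m. \<xi> m l k = (\<Sum>(c, m')\<leftarrow>cs. c * \<xi> m' l k))"

definition prepares_outcome ::
  "('m \<Rightarrow> 'k set) \<Rightarrow> ('p \<Rightarrow> 'm \<Rightarrow> 'k \<Rightarrow> real) \<Rightarrow> 'm \<Rightarrow> 'k \<Rightarrow> 'p \<Rightarrow> bool" where
  "prepares_outcome Out d m k p \<longleftrightarrow> (\<forall>k'\<in>Out m. d p m k' = (if k = k' then 1 else 0))"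

definition perfectly_predictable ::
  "'p set \<Rightarrow> ('m \<Rightarrow> 'k set) \<Rightarrow> ('p \<Rightarrow> 'm \<Rightarrow> 'k \<Rightarrow> real) \<Rightarrow> 'm \<Rightarrow> bool" where
  "perfectly_predictable P Out d m \<longleftrightarrow> (\<forall>k\<in>Out m. \<exists>p\<in>P. prepares_outcome Out d m k p)"

definition maximally_mixed ::
  "'p set \<Rightarrow> 'm set \<Rightarrow> ('m \<Rightarrow> 'k set) \<Rightarrow> ('p \<Rightarrow> 'm \<Rightarrow> 'k \<Rightarrow> real)
   \<Rightarrow> ('p \<times> (real \<times> 'p) list) set \<Rightarrow> 'p \<Rightarrow> bool" where
  "maximally_mixed P M Out d CP pmix \<longleftrightarrow>
     pmix \<in> P \<and>
     (\<forall>p'\<in>P. \<exists>(p, cs)\<in>CP. prep_equiv P M Out d pmix p \<and> p' \<in> snd ` set cs) \<and>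
     (\<forall>m\<in>M. perfectly_predictable P Out d m \<longrightarrow>
        (\<exists>(p, cs)\<in>CP. prep_equiv P M Out d pmix p \<and>
           (\<forall>(c, q)\<in>set cs. \<exists>k\<in>Out m. prepares_outcome Out d m k q) \<and>
           (\<forall>k\<in>Out m. \<exists>(c, q)\<in>set cs. prepares_outcome Out d m k q)))"

text \<open>Non-contextuality of T within the class of convexity-preserving representations.
  Omega is countable, so it is taken (w.l.o.g.) as a subset of nat.\<close>

definition noncontextual_convex_theory ::
  "'p set \<Rightarrow> 'm set \<Rightarrow> ('m \<Rightarrow> 'k set) \<Rightarrow> ('p \<Rightarrow> 'm \<Rightarrow> 'k \<Rightarrow> real)
   \<Rightarrow> ('p \<times> (real \<times> 'p) list) set \<Rightarrow> ('m \<times> (real \<times> 'm) list) set \<Rightarrow> bool" where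
  "noncontextual_convex_theory P M Out d CP CM \<longleftrightarrow>
     (\<exists>(\<Omega> :: nat set) \<mu> \<xi>. ontological_rep P M Out d \<Omega> \<mu> \<xi> \<and> noncontextual_rep P M Out d \<Omega> \<mu> \<xi>
                          \<and> preserves_convexity Out CP CM \<Omega> \<mu> \<xi>)"

text \<open>Outcome assignments Out^U are the extensional functions U \<rightarrow>E Ob.
  A state sigma gives sig sigma C, a distribution on Out^C for every context C.\<close>

definition marg :: "'o set \<Rightarrow> 'x set \<Rightarrow> (('x \<Rightarrow> 'o) \<Rightarrow> real) \<Rightarrow> 'x set \<Rightarrow> ('x \<Rightarrow> 'o) \<Rightarrow> real" where
  "marg Ob C f U t = (\<Sum>s\<in>{s \<in> C \<rightarrow>\<^sub>E Ob. restrict s U = t}. f s)"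

definition is_distribution_on :: "('a \<Rightarrow> real) \<Rightarrow> 'a set \<Rightarrow> bool" where
  "is_distribution_on f A \<longleftrightarrow> (\<forall>a. 0 \<le> f a) \<and> (\<forall>a. a \<notin> A \<longrightarrow> f a = 0) \<and> sum f A = 1"

definition empirical_theory ::
  "'x set \<Rightarrow> 'x set set \<Rightarrow> 's set \<Rightarrow> 'o set \<Rightarrow> ('s \<Rightarrow> 'x set \<Rightarrow> ('x \<Rightarrow> 'o) \<Rightarrow> real) \<Rightarrow> bool" where
  "empirical_theory X Mc S Ob sig \<longleftrightarrow>
     finite X \<and> finite Ob \<and> \<Union>Mc = X \<and> (\<forall>C\<in>Mc. \<forall>C'\<in>Mc. \<not> C \<subset> C') \<and>
     (\<forall>\<sigma>\<in>S. \<forall>C\<in>Mc. is_distribution_on (sig \<sigma> C) (C \<rightarrow>\<^sub>E Ob))"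

definition no_signalling ::
  "'x set set \<Rightarrow> 's set \<Rightarrow> 'o set \<Rightarrow> ('s \<Rightarrow> 'x set \<Rightarrow> ('x \<Rightarrow> 'o) \<Rightarrow> real) \<Rightarrow> bool" where
  "no_signalling Mc S Ob sig \<longleftrightarrow>
     (\<forall>\<sigma>\<in>S. \<forall>C\<in>Mc. \<forall>C'\<in>Mc. marg Ob C (sig \<sigma> C) (C \<inter> C') = marg Ob C' (sig \<sigma> C') (C \<inter> C'))"

definition sigU ::
  "'x set set \<Rightarrow> 'o set \<Rightarrow> ('s \<Rightarrow> 'x set \<Rightarrow> ('x \<Rightarrow> 'o) \<Rightarrow> real) \<Rightarrow> 's \<Rightarrow> 'x set \<Rightarrow> ('x \<Rightarrow> 'o) \<Rightarrow> real" where
  "sigU Mc Ob sig \<sigma> U = (let C = (SOME C. C \<in> Mc \<and> U \<subseteq> C) in marg Ob C (sig \<sigma> C) U)"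

text \<open>The operational theory Op(A): preparations S, measurements the nonempty
  jointly measurable sets U, outcomes Out^U, statistics sigma_U.\<close>

definition OpM :: "'x set set \<Rightarrow> 'x set set" where
  "OpM Mc = {U. U \<noteq> {} \<and> (\<exists>C\<in>Mc. U \<subseteq> C)}"

definition OpO :: "'o set \<Rightarrow> 'x set \<Rightarrow> ('x \<Rightarrow> 'o) set" where
  "OpO Ob U = U \<rightarrow>\<^sub>E Ob"

definition Opd ::
  "'x set set \<Rightarrow> 'o set \<Rightarrow> ('s \<Rightarrow> 'x set \<Rightarrow> ('x \<Rightarrow> 'o) \<Rightarrow> real) \<Rightarrow> 's \<Rightarrow> 'x set \<Rightarrow> ('x \<Rightarrow> 'o) \<Rightarrow> real" where
  "Opd Mc Ob sig = sigU Mc Ob sig"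

definition global_section ::
  "'x set \<Rightarrow> 'x set set \<Rightarrow> 's set \<Rightarrow> 'o set \<Rightarrow> ('s \<Rightarrow> 'x set \<Rightarrow> ('x \<Rightarrow> 'o) \<Rightarrow> real)
   \<Rightarrow> ('s \<Rightarrow> ('x \<Rightarrow> 'o) \<Rightarrow> real) \<Rightarrow> bool" where
  "global_section X Mc S Ob sig dg \<longleftrightarrow>
     (\<forall>\<sigma>\<in>S. is_distribution_on (dg \<sigma>) (X \<rightarrow>\<^sub>E Ob) \<and>
             (\<forall>C\<in>Mc. \<forall>t\<in>C \<rightarrow>\<^sub>E Ob. marg Ob X (dg \<sigma>) C t = sig \<sigma> C t))"

definition state_equiv ::
  "'x set set \<Rightarrow> 'o set \<Rightarrow> ('s \<Rightarrow> 'x set \<Rightarrow> ('x \<Rightarrow> 'o) \<Rightarrow> real) \<Rightarrow> 's \<Rightarrow> 's \<Rightarrow> bool" where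
  "state_equiv Mc Ob sig \<sigma> \<sigma>' \<longleftrightarrow> (\<forall>C\<in>Mc. \<forall>t\<in>C \<rightarrow>\<^sub>E Ob. sig \<sigma> C t = sig \<sigma>' C t)"

text \<open>x ~ x' iff sigma_{x} = sigma_{x'} for all states (distributions on Out compared
  via the obvious identification of Out^{x} and Out^{x'} with Out).\<close>

definition label_equiv ::
  "'x set set \<Rightarrow> 's set \<Rightarrow> 'o set \<Rightarrow> ('s \<Rightarrow> 'x set \<Rightarrow> ('x \<Rightarrow> 'o) \<Rightarrow> real) \<Rightarrow> 'x \<Rightarrow> 'x \<Rightarrow> bool" where
  "label_equiv Mc S Ob sig x x' \<longleftrightarrow>
     (\<forall>\<sigma>\<in>S. \<forall>v\<in>Ob. sigU Mc Ob sig \<sigma> {x} (\<lambda>y\<in>{x}. v) = sigU Mc Ob sig \<sigma> {x'} (\<lambda>y\<in>{x'}. v))"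

definition label_rel ::
  "'x set \<Rightarrow> 'x set set \<Rightarrow> 's set \<Rightarrow> 'o set \<Rightarrow> ('s \<Rightarrow> 'x set \<Rightarrow> ('x \<Rightarrow> 'o) \<Rightarrow> real) \<Rightarrow> ('x \<times> 'x) set" where
  "label_rel X Mc S Ob sig = {(x, x'). x \<in> X \<and> x' \<in> X \<and> label_equiv Mc S Ob sig x x'}"

definition label_class ::
  "'x set \<Rightarrow> 'x set set \<Rightarrow> 's set \<Rightarrow> 'o set \<Rightarrow> ('s \<Rightarrow> 'x set \<Rightarrow> ('x \<Rightarrow> 'o) \<Rightarrow> real) \<Rightarrow> 'x \<Rightarrow> 'x set" where
  "label_class X Mc S Ob sig x = label_rel X Mc S Ob sig `` {x}"

definition canonical_admissible ::
  "'x set \<Rightarrow> 'x set set \<Rightarrow> 's set \<Rightarrow> 'o set \<Rightarrow> ('s \<Rightarrow> 'x set \<Rightarrow> ('x \<Rightarrow> 'o) \<Rightarrow> real)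
   \<Rightarrow> ('s \<Rightarrow> ('x \<Rightarrow> 'o) \<Rightarrow> real) \<Rightarrow> bool" where
  "canonical_admissible X Mc S Ob sig dg \<longleftrightarrow>
     global_section X Mc S Ob sig dg \<and>
     (\<forall>\<sigma>\<in>S. \<forall>s. \<forall>x\<in>X. \<forall>x'\<in>X. label_equiv Mc S Ob sig x x' \<and> s x \<noteq> s x' \<longrightarrow> dg \<sigma> s = 0) \<and>
     (\<forall>\<sigma>\<in>S. \<forall>\<sigma>'\<in>S. state_equiv Mc Ob sig \<sigma> \<sigma>' \<longrightarrow> dg \<sigma> = dg \<sigma>')"

text \<open>The canonical representation: ontic states t : X/~ \<rightarrow> Ob (restricted to supports).\<close>

definition lift_ontic ::
  "'x set \<Rightarrow> 'x set set \<Rightarrow> 's set \<Rightarrow> 'o set \<Rightarrow> ('s \<Rightarrow> 'x set \<Rightarrow> ('x \<Rightarrow> 'o) \<Rightarrow> real)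
   \<Rightarrow> ('x set \<Rightarrow> 'o) \<Rightarrow> 'x set \<Rightarrow> ('x \<Rightarrow> 'o)" where
  "lift_ontic X Mc S Ob sig t U = restrict (t \<circ> label_class X Mc S Ob sig) U"

definition can_Omega ::
  "'x set \<Rightarrow> 'x set set \<Rightarrow> 's set \<Rightarrow> 'o set \<Rightarrow> ('s \<Rightarrow> 'x set \<Rightarrow> ('x \<Rightarrow> 'o) \<Rightarrow> real)
   \<Rightarrow> ('s \<Rightarrow> ('x \<Rightarrow> 'o) \<Rightarrow> real) \<Rightarrow> ('x set \<Rightarrow> 'o) set" where
  "can_Omega X Mc S Ob sig dg =
     {t \<in> (X // label_rel X Mc S Ob sig) \<rightarrow>\<^sub>E Ob. \<exists>\<sigma>\<in>S. 0 < dg \<sigma> (lift_ontic X Mc S Ob sig t X)}"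

definition can_mu ::
  "'x set \<Rightarrow> 'x set set \<Rightarrow> 's set \<Rightarrow> 'o set \<Rightarrow> ('s \<Rightarrow> 'x set \<Rightarrow> ('x \<Rightarrow> 'o) \<Rightarrow> real)
   \<Rightarrow> ('s \<Rightarrow> ('x \<Rightarrow> 'o) \<Rightarrow> real) \<Rightarrow> 's \<Rightarrow> ('x set \<Rightarrow> 'o) \<Rightarrow> real" where
  "can_mu X Mc S Ob sig dg \<sigma> t =
     (if t \<in> can_Omega X Mc S Ob sig dg then dg \<sigma> (lift_ontic X Mc S Ob sig t X) else 0)"

definition can_xi ::
  "'x set \<Rightarrow> 'x set set \<Rightarrow> 's set \<Rightarrow> 'o set \<Rightarrow> ('s \<Rightarrow> 'x set \<Rightarrow> ('x \<Rightarrow> 'o) \<Rightarrow> real)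
   \<Rightarrow> 'x set \<Rightarrow> ('x set \<Rightarrow> 'o) \<Rightarrow> ('x \<Rightarrow> 'o) \<Rightarrow> real" where
  "can_xi X Mc S Ob sig U t s = (if s = lift_ontic X Mc S Ob sig t U then 1 else 0)"

text \<open>Op(A) admits a canonical ontological representation which is non-contextual
  (and, as only such representations are considered, convexity preserving).\<close>

definition admits_nc_canonical_rep ::
  "'x set \<Rightarrow> 'x set set \<Rightarrow> 's set \<Rightarrow> 'o set \<Rightarrow> ('s \<Rightarrow> 'x set \<Rightarrow> ('x \<Rightarrow> 'o) \<Rightarrow> real)
   \<Rightarrow> ('s \<times> (real \<times> 's) list) set \<Rightarrow> ('x set \<times> (real \<times> 'x set) list) set \<Rightarrow> bool" where
  "admits_nc_canonical_rep X Mc S Ob sig CP CM \<longleftrightarrow>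
     (\<exists>dg. canonical_admissible X Mc S Ob sig dg \<and>
       (let \<Omega> = can_Omega X Mc S Ob sig dg; \<mu> = can_mu X Mc S Ob sig dg; \<xi> = can_xi X Mc S Ob sig
        in ontological_rep S (OpM Mc) (OpO Ob) (Opd Mc Ob sig) \<Omega> \<mu> \<xi> \<and>
           noncontextual_rep S (OpM Mc) (OpO Ob) (Opd Mc Ob sig) \<Omega> \<mu> \<xi> \<and>
           preserves_convexity (OpO Ob) CP CM \<Omega> \<mu> \<xi>))"

end

theory Submission
  imports Defs
begin


lemma has_sum_sum_fin:
  fixes f :: "'s \<Rightarrow> 'a \<Rightarrow> real"
  assumes "finite T" "\<And>s. s \<in> T \<Longrightarrow> (f s has_sum a s) A"
  shows "((\<lambda>x. \<Sum>s\<in>T. f s x) has_sum (\<Sum>s\<in>T. a s)) A"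
  using assms
proof (induction T rule: finite_induct)
  case empty then show ?case by simp
next
  case (insert s T)
  then show ?case by (simp add: has_sum_add)
qed

lemma marg_trans:
  assumes "finite C" "finite Ob" "V \<subseteq> W" "W \<subseteq> C"
  shows "marg Ob W (marg Ob C f W) V t = marg Ob C f V t"
proof -
  have "marg Ob W (marg Ob C f W) V t =
     (\<Sum>w\<in>{w \<in> W \<rightarrow>\<^sub>E Ob. restrict w V = t}. sum f {s \<in> {s \<in> C \<rightarrow>\<^sub>E Ob. restrict s V = t}. restrict s W = w})"
    unfolding marg_def
  proof (rule sum.cong[OF refl])
    fix w assume "w \<in> {w \<in> W \<rightarrow>\<^sub>E Ob. restrict w V = t}"
    then have "restrict w V = t" by simp
    then have "{s \<in> C \<rightarrow>\<^sub>E Ob. restrict s W = w} = {s \<in> {s \<in> C \<rightarrow>\<^sub>E Ob. restrict s V = t}. restrict s W = w}"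
      using assms(3) by (auto simp: restrict_restrict Int_absorb2 Int_absorb1)
    then show "sum f {s \<in> C \<rightarrow>\<^sub>E Ob. restrict s W = w} = sum f {s \<in> {s \<in> C \<rightarrow>\<^sub>E Ob. restrict s V = t}. restrict s W = w}"
      by simp
  qed
  also have "\<dots> = sum f {s \<in> C \<rightarrow>\<^sub>E Ob. restrict s V = t}"
  proof (rule sum.group)
    show "finite {s \<in> C \<rightarrow>\<^sub>E Ob. restrict s V = t}" using assms by (simp add: finite_PiE)
    show "finite {w \<in> W \<rightarrow>\<^sub>E Ob. restrict w V = t}" using assms by (simp add: finite_PiE finite_subset)
    show "(\<lambda>s. restrict s W) ` {s \<in> C \<rightarrow>\<^sub>E Ob. restrict s V = t} \<subseteq> {w \<in> W \<rightarrow>\<^sub>E Ob. restrict w V = t}"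
      using assms(3,4) by (auto simp: restrict_restrict Int_absorb2 Int_absorb1)
  qed
  finally show ?thesis unfolding marg_def .
qed

lemma marg_self:
  assumes "t \<in> C \<rightarrow>\<^sub>E Ob"
  shows "marg Ob C f C t = f t"
proof -
  have "{s \<in> C \<rightarrow>\<^sub>E Ob. restrict s C = t} = {t}"
    using assms by (auto simp: restrict_PiE_iff PiE_restrict)
  then show ?thesis unfolding marg_def by simp
qed

lemma ET_finite_ctx:
  assumes "empirical_theory X Mc S Ob sig" "C \<in> Mc"
  shows "finite C" "finite Ob" "C \<subseteq> X"
  using assms unfolding empirical_theory_def by (auto intro: finite_subset)

lemma sigU_some:
  assumes "C0 \<in> Mc" "U \<subseteq> C0"
  shows "(SOME C. C \<in> Mc \<and> U \<subseteq> C) \<in> Mc \<and> U \<subseteq> (SOME C. C \<in> Mc \<and> U \<subseteq> C)"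
  using assms by (metis (mono_tags, lifting) someI)

lemma sigU_context:
  assumes ET: "empirical_theory X Mc S Ob sig" and "C \<in> Mc" "t \<in> C \<rightarrow>\<^sub>E Ob"
  shows "sigU Mc Ob sig \<sigma> C t = sig \<sigma> C t"
proof -
  let ?C = "SOME C'. C' \<in> Mc \<and> C \<subseteq> C'"
  have h: "?C \<in> Mc" "C \<subseteq> ?C" using sigU_some[OF assms(2) order_refl] by auto
  have "\<not> C \<subset> ?C" using ET assms(2) h(1) unfolding empirical_theory_def by blast
  then have "?C = C" using h by blast
  then show ?thesis unfolding sigU_def Let_def using marg_self[OF assms(3)] by simp
qed

lemma sigU_marg:
  assumes ET: "empirical_theory X Mc S Ob sig" and NS: "no_signalling Mc S Ob sig"
    and "\<sigma> \<in> S" "V \<subseteq> U" "C0 \<in> Mc" "U \<subseteq> C0"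
  shows "sigU Mc Ob sig \<sigma> V t = marg Ob U (sigU Mc Ob sig \<sigma> U) V t"
proof -
  define CU where "CU = (SOME C. C \<in> Mc \<and> U \<subseteq> C)"
  define CV where "CV = (SOME C. C \<in> Mc \<and> V \<subseteq> C)"
  have hU: "CU \<in> Mc" "U \<subseteq> CU" using sigU_some[OF assms(5,6)] unfolding CU_def by auto
  have hV: "CV \<in> Mc" "V \<subseteq> CV" using sigU_some[OF assms(5)] assms(4,6) unfolding CV_def by auto
  have fU: "finite CU" "finite Ob" using ET_finite_ctx[OF ET hU(1)] by auto
  have fV: "finite CV" using ET_finite_ctx[OF ET hV(1)] by auto
  have eqU: "sigU Mc Ob sig \<sigma> U = marg Ob CU (sig \<sigma> CU) U"
    unfolding sigU_def CU_def Let_def by simp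
  have eqV: "sigU Mc Ob sig \<sigma> V = marg Ob CV (sig \<sigma> CV) V"
    unfolding sigU_def CV_def Let_def by simp
  have ns: "marg Ob CU (sig \<sigma> CU) (CU \<inter> CV) = marg Ob CV (sig \<sigma> CV) (CU \<inter> CV)"
    using NS assms(3) hU(1) hV(1) unfolding no_signalling_def by blast
  have VI: "V \<subseteq> CU \<inter> CV" using hU hV assms(4) by auto
  have "marg Ob U (sigU Mc Ob sig \<sigma> U) V t = marg Ob CU (sig \<sigma> CU) V t"
    unfolding eqU using marg_trans[OF fU assms(4) hU(2)] .
  also have "\<dots> = marg Ob (CU \<inter> CV) (marg Ob CU (sig \<sigma> CU) (CU \<inter> CV)) V t"
    using marg_trans[OF fU VI, of "sig \<sigma> CU" t] by simp
  also have "\<dots> = marg Ob (CU \<inter> CV) (marg Ob CV (sig \<sigma> CV) (CU \<inter> CV)) V t"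
    using ns by simp
  also have "\<dots> = marg Ob CV (sig \<sigma> CV) V t"
    using marg_trans[OF fV fU(2) VI, of "sig \<sigma> CV" t] by simp
  finally show ?thesis unfolding eqV by simp
qed



lemma OpM_sub:
  assumes "empirical_theory X Mc S Ob sig" "U \<in> OpM Mc"
  shows "U \<subseteq> X" "\<exists>C\<in>Mc. U \<subseteq> C"
  using assms unfolding empirical_theory_def OpM_def by auto

lemma lift_in:
  assumes "t \<in> X // label_rel X Mc S Ob sig \<rightarrow>\<^sub>E Ob" "U \<subseteq> X"
  shows "lift_ontic X Mc S Ob sig t U \<in> U \<rightarrow>\<^sub>E Ob"
proof -
  have "\<And>x. x \<in> U \<Longrightarrow> label_class X Mc S Ob sig x \<in> X // label_rel X Mc S Ob sig"
    using assms(2) unfolding label_class_def by (auto intro: quotientI)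
  then show ?thesis using assms(1) unfolding lift_ontic_def by auto
qed

lemma lift_restrict:
  assumes "U \<subseteq> X"
  shows "lift_ontic X Mc S Ob sig t U = restrict (lift_ontic X Mc S Ob sig t X) U"
  using assms unfolding lift_ontic_def by (intro ext) (auto simp: restrict_def)

lemma lift_inj:
  "inj_on (\<lambda>t. lift_ontic X Mc S Ob sig t X) (X // label_rel X Mc S Ob sig \<rightarrow>\<^sub>E Ob)"
proof (rule inj_onI)
  fix t t' assume t: "t \<in> X // label_rel X Mc S Ob sig \<rightarrow>\<^sub>E Ob" and t': "t' \<in> X // label_rel X Mc S Ob sig \<rightarrow>\<^sub>E Ob"
    and eq: "lift_ontic X Mc S Ob sig t X = lift_ontic X Mc S Ob sig t' X"
  show "t = t'"
  proof (rule ext)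
    fix c show "t c = t' c"
    proof (cases "c \<in> X // label_rel X Mc S Ob sig")
      case True
      then obtain x where x: "c = label_rel X Mc S Ob sig `` {x}" "x \<in> X" by (meson quotientE)
      have "lift_ontic X Mc S Ob sig t X x = lift_ontic X Mc S Ob sig t' X x" using eq by simp
      then show ?thesis using x unfolding lift_ontic_def label_class_def by simp
    next
      case False then show ?thesis using t t' by (metis PiE_arb)
    qed
  qed
qed

lemma adm_const:
  assumes "canonical_admissible X Mc S Ob sig dg" "\<sigma> \<in> S" "dg \<sigma> s \<noteq> 0"
    "x \<in> X" "x' \<in> X" "label_equiv Mc S Ob sig x x'"
  shows "s x = s x'"
  using assms unfolding canonical_admissible_def by blast

lemma adm_nonneg:
  assumes "canonical_admissible X Mc S Ob sig dg" "\<sigma> \<in> S"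
  shows "0 \<le> dg \<sigma> s"
  using assms unfolding canonical_admissible_def global_section_def is_distribution_on_def by blast

lemma lift_image:
  assumes adm: "canonical_admissible X Mc S Ob sig dg"
  shows "(\<lambda>t. lift_ontic X Mc S Ob sig t X) ` can_Omega X Mc S Ob sig dg
         = {s \<in> X \<rightarrow>\<^sub>E Ob. \<exists>\<sigma>\<in>S. 0 < dg \<sigma> s}"
proof
  show "(\<lambda>t. lift_ontic X Mc S Ob sig t X) ` can_Omega X Mc S Ob sig dg \<subseteq> {s \<in> X \<rightarrow>\<^sub>E Ob. \<exists>\<sigma>\<in>S. 0 < dg \<sigma> s}"
  proof
    fix s assume "s \<in> (\<lambda>t. lift_ontic X Mc S Ob sig t X) ` can_Omega X Mc S Ob sig dg"
    then obtain t where t: "t \<in> can_Omega X Mc S Ob sig dg" "s = lift_ontic X Mc S Ob sig t X" by auto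
    then show "s \<in> {s \<in> X \<rightarrow>\<^sub>E Ob. \<exists>\<sigma>\<in>S. 0 < dg \<sigma> s}"
      using lift_in[OF _ order_refl, of t X Mc S Ob sig] unfolding can_Omega_def by auto
  qed
next
  let ?R = "label_rel X Mc S Ob sig"
  show "{s \<in> X \<rightarrow>\<^sub>E Ob. \<exists>\<sigma>\<in>S. 0 < dg \<sigma> s} \<subseteq> (\<lambda>t. lift_ontic X Mc S Ob sig t X) ` can_Omega X Mc S Ob sig dg"
  proof
    fix s assume "s \<in> {s \<in> X \<rightarrow>\<^sub>E Ob. \<exists>\<sigma>\<in>S. 0 < dg \<sigma> s}"
    then obtain \<sigma> where s: "s \<in> X \<rightarrow>\<^sub>E Ob" "\<sigma> \<in> S" "0 < dg \<sigma> s" by auto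
    define t where "t = restrict (\<lambda>c. s (SOME x. x \<in> c)) (X // ?R)"
    have lt: "lift_ontic X Mc S Ob sig t X = s"
    proof (rule ext)
      fix x show "lift_ontic X Mc S Ob sig t X x = s x"
      proof (cases "x \<in> X")
        case True
        have cin: "?R `` {x} \<in> X // ?R" using True by (rule quotientI)
        have xin: "x \<in> ?R `` {x}" using True unfolding label_rel_def label_equiv_def by auto
        define y where "y = (SOME y. y \<in> ?R `` {x})"
        have "y \<in> ?R `` {x}" unfolding y_def using xin by (rule someI)
        then have "y \<in> X" "label_equiv Mc S Ob sig x y" unfolding label_rel_def by auto
        then have "s x = s y" using adm_const[OF adm s(2) _ True] s(3) by auto
        then show ?thesis using True cin unfolding lift_ontic_def t_def label_class_def y_def by simp
      next
        case False then show ?thesis using s(1) unfolding lift_ontic_def by auto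
      qed
    qed
    have "t \<in> X // ?R \<rightarrow>\<^sub>E Ob"
    proof -
      have "\<And>c. c \<in> X // ?R \<Longrightarrow> s (SOME x. x \<in> c) \<in> Ob"
      proof -
        fix c assume "c \<in> X // ?R"
        then obtain x where x: "c = ?R `` {x}" "x \<in> X" by (meson quotientE)
        have "x \<in> c" using x unfolding label_rel_def label_equiv_def by auto
        then have "(SOME x. x \<in> c) \<in> c" by (rule someI)
        then have "(SOME x. x \<in> c) \<in> X" using x unfolding label_rel_def by auto
        then show "s (SOME x. x \<in> c) \<in> Ob" using s(1) by auto
      qed
      then show ?thesis unfolding t_def by auto
    qed
    then have "t \<in> can_Omega X Mc S Ob sig dg" unfolding can_Omega_def using lt s(2,3) by blast
    then show "s \<in> (\<lambda>t. lift_ontic X Mc S Ob sig t X) ` can_Omega X Mc S Ob sig dg" using lt by force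
  qed
qed

lemma can_sum:
  assumes adm: "canonical_admissible X Mc S Ob sig dg" and fin: "finite X" "finite Ob" and "\<sigma> \<in> S"
  shows "(\<Sum>t\<in>can_Omega X Mc S Ob sig dg. (if P (lift_ontic X Mc S Ob sig t X) then dg \<sigma> (lift_ontic X Mc S Ob sig t X) else 0))
       = (\<Sum>s\<in>X \<rightarrow>\<^sub>E Ob. if P s then dg \<sigma> s else 0)"
proof -
  let ?G = "{s \<in> X \<rightarrow>\<^sub>E Ob. \<exists>\<sigma>\<in>S. 0 < dg \<sigma> s}"
  have inj: "inj_on (\<lambda>t. lift_ontic X Mc S Ob sig t X) (can_Omega X Mc S Ob sig dg)"
    using lift_inj by (rule inj_on_subset) (auto simp: can_Omega_def)
  have "(\<Sum>t\<in>can_Omega X Mc S Ob sig dg. (if P (lift_ontic X Mc S Ob sig t X) then dg \<sigma> (lift_ontic X Mc S Ob sig t X) else 0))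
      = (\<Sum>s\<in>?G. if P s then dg \<sigma> s else 0)"
    using sum.reindex[OF inj, of "\<lambda>s. if P s then dg \<sigma> s else 0"] lift_image[OF adm] by simp
  also have "\<dots> = (\<Sum>s\<in>X \<rightarrow>\<^sub>E Ob. if P s then dg \<sigma> s else 0)"
  proof (rule sum.mono_neutral_left)
    show "finite (X \<rightarrow>\<^sub>E Ob)" using fin by (simp add: finite_PiE)
    show "?G \<subseteq> X \<rightarrow>\<^sub>E Ob" by auto
    show "\<forall>s\<in>(X \<rightarrow>\<^sub>E Ob) - ?G. (if P s then dg \<sigma> s else 0) = 0"
    proof
      fix s assume "s \<in> (X \<rightarrow>\<^sub>E Ob) - ?G"
      then have "\<not> 0 < dg \<sigma> s" using \<open>\<sigma> \<in> S\<close> by blast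
      then have "dg \<sigma> s = 0" using adm_nonneg[OF adm \<open>\<sigma> \<in> S\<close>, of s] by linarith
      then show "(if P s then dg \<sigma> s else 0) = 0" by simp
    qed
  qed
  finally show ?thesis .
qed



lemma dg_marg:
  assumes ET: "empirical_theory X Mc S Ob sig" and adm: "canonical_admissible X Mc S Ob sig dg"
    and "\<sigma> \<in> S" "U \<in> OpM Mc"
  shows "marg Ob X (dg \<sigma>) U k = sigU Mc Ob sig \<sigma> U k"
proof -
  obtain C0 where C0: "C0 \<in> Mc" "U \<subseteq> C0" using assms(4) unfolding OpM_def by auto
  define CU where "CU = (SOME C. C \<in> Mc \<and> U \<subseteq> C)"
  have hU: "CU \<in> Mc" "U \<subseteq> CU" using sigU_some[OF C0] unfolding CU_def by auto
  have fX: "finite X" "finite Ob" using ET unfolding empirical_theory_def by auto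
  have CX: "CU \<subseteq> X" using ET_finite_ctx[OF ET hU(1)] by auto
  have gs: "\<And>s. s \<in> CU \<rightarrow>\<^sub>E Ob \<Longrightarrow> marg Ob X (dg \<sigma>) CU s = sig \<sigma> CU s"
    using adm assms(3) hU(1) unfolding canonical_admissible_def global_section_def by blast
  have "marg Ob X (dg \<sigma>) U k = marg Ob CU (marg Ob X (dg \<sigma>) CU) U k"
    using marg_trans[OF fX hU(2) CX] by simp
  also have "\<dots> = marg Ob CU (sig \<sigma> CU) U k"
    unfolding marg_def by (rule sum.cong) (auto simp: gs[unfolded marg_def])
  also have "\<dots> = sigU Mc Ob sig \<sigma> U k"
    unfolding sigU_def CU_def Let_def by simp
  finally show ?thesis .
qed

lemma can_ont:
  assumes ET: "empirical_theory X Mc S Ob sig" and adm: "canonical_admissible X Mc S Ob sig dg"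
  shows "ontological_rep S (OpM Mc) (OpO Ob) (Opd Mc Ob sig) (can_Omega X Mc S Ob sig dg)
           (can_mu X Mc S Ob sig dg) (can_xi X Mc S Ob sig)"
proof -
  let ?R = "label_rel X Mc S Ob sig"
  let ?Om = "can_Omega X Mc S Ob sig dg"
  have fX: "finite X" "finite Ob" using ET unfolding empirical_theory_def by auto
  have fQ: "finite (X // ?R)" by (rule finite_quotient[OF fX(1)]) (auto simp: label_rel_def)
  have fOm: "finite ?Om"
    by (rule finite_subset[of _ "X // ?R \<rightarrow>\<^sub>E Ob"]) (auto simp: can_Omega_def finite_PiE fQ fX)
  have OmPi: "\<And>t. t \<in> ?Om \<Longrightarrow> t \<in> X // ?R \<rightarrow>\<^sub>E Ob" unfolding can_Omega_def by blast
  have dist: "\<And>\<sigma>. \<sigma> \<in> S \<Longrightarrow> is_distribution_on (dg \<sigma>) (X \<rightarrow>\<^sub>E Ob)"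
    using adm unfolding canonical_admissible_def global_section_def by blast
  show ?thesis unfolding ontological_rep_def
  proof (intro conjI ballI allI impI)
    show "countable ?Om" using fOm by (rule countable_finite)
  next
    fix \<sigma> l assume "\<sigma> \<in> S"
    then show "0 \<le> can_mu X Mc S Ob sig dg \<sigma> l" unfolding can_mu_def using adm_nonneg[OF adm] by simp
  next
    fix \<sigma> l assume "\<sigma> \<in> S" "l \<notin> ?Om"
    then show "can_mu X Mc S Ob sig dg \<sigma> l = 0" unfolding can_mu_def by simp
  next
    fix \<sigma> assume s: "\<sigma> \<in> S"
    have "sum (can_mu X Mc S Ob sig dg \<sigma>) ?Om =
      (\<Sum>t\<in>?Om. (if True then dg \<sigma> (lift_ontic X Mc S Ob sig t X) else 0))"
      unfolding can_mu_def by simp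
    also have "\<dots> = (\<Sum>s\<in>X \<rightarrow>\<^sub>E Ob. if True then dg \<sigma> s else 0)"
      by (rule can_sum[OF adm fX s, of "\<lambda>_. True"])
    also have "\<dots> = 1" using dist[OF s] unfolding is_distribution_on_def by simp
    finally show "(can_mu X Mc S Ob sig dg \<sigma> has_sum 1) ?Om"
      using has_sum_finite[OF fOm, of "can_mu X Mc S Ob sig dg \<sigma>"] by simp
  next
    fix U t k assume U: "U \<in> OpM Mc" and t: "t \<in> ?Om"
    show "0 \<le> can_xi X Mc S Ob sig U t k" unfolding can_xi_def by simp
  next
    fix U t k assume U: "U \<in> OpM Mc" and t: "t \<in> ?Om" and k: "k \<notin> OpO Ob U"
    have "lift_ontic X Mc S Ob sig t U \<in> U \<rightarrow>\<^sub>E Ob"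
      using lift_in[OF OmPi[OF t] OpM_sub(1)[OF ET U]] .
    then show "can_xi X Mc S Ob sig U t k = 0" using k unfolding can_xi_def OpO_def by auto
  next
    fix U t assume U: "U \<in> OpM Mc" and t: "t \<in> ?Om"
    have li: "lift_ontic X Mc S Ob sig t U \<in> U \<rightarrow>\<^sub>E Ob"
      using lift_in[OF OmPi[OF t] OpM_sub(1)[OF ET U]] .
    have fin: "finite (U \<rightarrow>\<^sub>E Ob)" using OpM_sub(1)[OF ET U] fX by (simp add: finite_PiE finite_subset)
    show "sum (can_xi X Mc S Ob sig U t) (OpO Ob U) = 1"
      unfolding can_xi_def OpO_def using li fin by (simp add: sum.delta)
  next
    fix \<sigma> U k assume s: "\<sigma> \<in> S" and U: "U \<in> OpM Mc" and k: "k \<in> OpO Ob U"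
    have UX: "U \<subseteq> X" using OpM_sub(1)[OF ET U] .
    have "(\<Sum>t\<in>?Om. can_xi X Mc S Ob sig U t k * can_mu X Mc S Ob sig dg \<sigma> t)
       = (\<Sum>t\<in>?Om. (if (\<lambda>s. restrict s U = k) (lift_ontic X Mc S Ob sig t X) then dg \<sigma> (lift_ontic X Mc S Ob sig t X) else 0))"
      by (rule sum.cong) (auto simp: can_xi_def can_mu_def lift_restrict[OF UX])
    also have "\<dots> = (\<Sum>s\<in>X \<rightarrow>\<^sub>E Ob. if restrict s U = k then dg \<sigma> s else 0)"
      by (rule can_sum[OF adm fX s])
    also have "\<dots> = marg Ob X (dg \<sigma>) U k"
      unfolding marg_def by (simp add: sum.inter_filter[symmetric] finite_PiE fX)
    also have "\<dots> = Opd Mc Ob sig \<sigma> U k" unfolding Opd_def by (rule dg_marg[OF ET adm s U])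
    finally show "((\<lambda>l. can_xi X Mc S Ob sig U l k * can_mu X Mc S Ob sig dg \<sigma> l) has_sum Opd Mc Ob sig \<sigma> U k) ?Om"
      using has_sum_finite[OF fOm, of "\<lambda>l. can_xi X Mc S Ob sig U l k * can_mu X Mc S Ob sig dg \<sigma> l"] by simp
  next
    fix l assume "l \<in> ?Om"
    then show "\<exists>p\<in>S. 0 < can_mu X Mc S Ob sig dg p l" unfolding can_mu_def can_Omega_def by auto
  qed
qed



lemma transfer_nat:
  fixes \<Omega> :: "'l set" and \<mu> :: "'p \<Rightarrow> 'l \<Rightarrow> real" and \<xi> :: "'m \<Rightarrow> 'l \<Rightarrow> 'k \<Rightarrow> real"
  assumes O: "ontological_rep P M Out d \<Omega> \<mu> \<xi>" and N: "noncontextual_rep P M Out d \<Omega> \<mu> \<xi>"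
    and V: "preserves_convexity Out CP CM \<Omega> \<mu> \<xi>"
  shows "noncontextual_convex_theory P M Out d CP CM"
proof -
  have cO: "countable \<Omega>" using O unfolding ontological_rep_def by blast
  define h where "h = to_nat_on \<Omega>"
  define g where "g = from_nat_into \<Omega>"
  have inj: "inj_on h \<Omega>" unfolding h_def using cO by blast
  have gh: "\<And>l. l \<in> \<Omega> \<Longrightarrow> g (h l) = l" unfolding g_def h_def using cO by simp
  define \<Omega>' where "\<Omega>' = h ` \<Omega>"
  define \<mu>' where "\<mu>' = (\<lambda>p n. if n \<in> \<Omega>' then \<mu> p (g n) else 0)"
  define \<xi>' where "\<xi>' = (\<lambda>m n k. \<xi> m (g n) k)"
  have gO: "\<And>n. n \<in> \<Omega>' \<Longrightarrow> g n \<in> \<Omega>" unfolding \<Omega>'_def using gh by auto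
  have mh: "\<And>p l. l \<in> \<Omega> \<Longrightarrow> \<mu>' p (h l) = \<mu> p l" unfolding \<mu>'_def \<Omega>'_def using gh by auto
  have hs: "\<And>(f :: 'l \<Rightarrow> real) x. ((\<lambda>n. f (g n)) has_sum x) \<Omega>' \<longleftrightarrow> (f has_sum x) \<Omega>"
  proof -
    fix f :: "'l \<Rightarrow> real" and x
    have "((\<lambda>n. f (g n)) has_sum x) \<Omega>' \<longleftrightarrow> (((\<lambda>n. f (g n)) \<circ> h) has_sum x) \<Omega>"
      unfolding \<Omega>'_def by (rule has_sum_reindex[OF inj])
    also have "\<dots> \<longleftrightarrow> (f has_sum x) \<Omega>" by (rule has_sum_cong) (simp add: gh)
    finally show "((\<lambda>n. f (g n)) has_sum x) \<Omega>' \<longleftrightarrow> (f has_sum x) \<Omega>" .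
  qed
  have o': "ontological_rep P M Out d \<Omega>' \<mu>' \<xi>'"
    unfolding ontological_rep_def
  proof (intro conjI ballI allI impI)
    show "countable \<Omega>'" unfolding \<Omega>'_def using cO by simp
  next
    fix p l assume "p \<in> P" then show "0 \<le> \<mu>' p l" using O unfolding \<mu>'_def ontological_rep_def by auto
  next
    fix p l assume "p \<in> P" "l \<notin> \<Omega>'" then show "\<mu>' p l = 0" unfolding \<mu>'_def by auto
  next
    fix p assume p: "p \<in> P"
    have "(\<mu> p has_sum 1) \<Omega>" using O p unfolding ontological_rep_def by blast
    then have "((\<lambda>n. \<mu> p (g n)) has_sum 1) \<Omega>'" using hs by blast
    then show "(\<mu>' p has_sum 1) \<Omega>'" by (rule has_sum_cong[THEN iffD1, rotated]) (simp add: \<mu>'_def)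
  next
    fix m l k assume "m \<in> M" "l \<in> \<Omega>'" then show "0 \<le> \<xi>' m l k"
      using O gO unfolding \<xi>'_def ontological_rep_def by blast
  next
    fix m l k assume "m \<in> M" "l \<in> \<Omega>'" "k \<notin> Out m" then show "\<xi>' m l k = 0"
      using O gO unfolding \<xi>'_def ontological_rep_def by blast
  next
    fix m l assume "m \<in> M" "l \<in> \<Omega>'" then show "sum (\<xi>' m l) (Out m) = 1"
      using O gO unfolding \<xi>'_def ontological_rep_def by blast
  next
    fix p m k assume "p \<in> P" "m \<in> M" "k \<in> Out m"
    then have "((\<lambda>l. \<xi> m l k * \<mu> p l) has_sum d p m k) \<Omega>" using O unfolding ontological_rep_def by blast
    then have "((\<lambda>n. \<xi> m (g n) k * \<mu> p (g n)) has_sum d p m k) \<Omega>'" using hs[of "\<lambda>l. \<xi> m l k * \<mu> p l"] by simp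
    then show "((\<lambda>l. \<xi>' m l k * \<mu>' p l) has_sum d p m k) \<Omega>'"
      by (rule has_sum_cong[THEN iffD1, rotated]) (simp add: \<mu>'_def \<xi>'_def)
  next
    fix n assume n: "n \<in> \<Omega>'"
    then obtain p where "p \<in> P" "0 < \<mu> p (g n)" using O gO[OF n] unfolding ontological_rep_def by blast
    then show "\<exists>p\<in>P. 0 < \<mu>' p n" using n unfolding \<mu>'_def by auto
  qed
  have n': "noncontextual_rep P M Out d \<Omega>' \<mu>' \<xi>'"
    using N gO unfolding noncontextual_rep_def \<mu>'_def \<xi>'_def by (auto 0 3)
  have v': "preserves_convexity Out CP CM \<Omega>' \<mu>' \<xi>'"
    unfolding preserves_convexity_def
  proof (intro conjI)
    show "\<forall>(p, cs)\<in>CP. \<forall>l. \<mu>' p l = (\<Sum>(c, q)\<leftarrow>cs. c * \<mu>' q l)"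
    proof (intro ballI)
      fix pc assume pc: "pc \<in> CP"
      obtain p cs where pcs: "pc = (p, cs)" by fastforce
      show "case pc of (p, cs) \<Rightarrow> \<forall>l. \<mu>' p l = (\<Sum>(c, q)\<leftarrow>cs. c * \<mu>' q l)"
        unfolding pcs prod.case
      proof (intro allI)
        fix l
        have e: "\<mu> p (g l) = (\<Sum>(c, q)\<leftarrow>cs. c * \<mu> q (g l))" using V pc pcs unfolding preserves_convexity_def by auto
        show "\<mu>' p l = (\<Sum>(c, q)\<leftarrow>cs. c * \<mu>' q l)"
        proof (cases "l \<in> \<Omega>'")
          case True then show ?thesis using e unfolding \<mu>'_def by simp
        next
          case False
          have "(\<Sum>(c, q)\<leftarrow>cs. c * \<mu>' q l) = (\<Sum>(c, q)\<leftarrow>cs. 0)"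
            unfolding \<mu>'_def using False by (intro arg_cong[where f=sum_list] map_cong) auto
          also have "\<dots> = 0" by (induction cs) auto
          finally show ?thesis using False unfolding \<mu>'_def by simp
        qed
      qed
    qed
    show "\<forall>(m, cs)\<in>CM. \<forall>l\<in>\<Omega>'. \<forall>k\<in>Out m. \<xi>' m l k = (\<Sum>(c, m')\<leftarrow>cs. c * \<xi>' m' l k)"
      using V gO unfolding preserves_convexity_def \<xi>'_def by fastforce
  qed
  show ?thesis unfolding noncontextual_convex_theory_def using o' n' v' by blast
qed



lemma support_one:
  fixes \<xi> \<mu> :: "'l \<Rightarrow> real"
  assumes h1: "((\<lambda>l. \<xi> l * \<mu> l) has_sum D) \<Omega>" and D: "1 \<le> D" and h2: "(\<mu> has_sum 1) \<Omega>"
    and b: "\<And>l. l \<in> \<Omega> \<Longrightarrow> \<xi> l \<le> 1" and nn: "\<And>l. l \<in> \<Omega> \<Longrightarrow> 0 \<le> \<mu> l"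
    and l0: "l0 \<in> \<Omega>" "0 < \<mu> l0"
  shows "\<xi> l0 = 1"
proof -
  have "((\<lambda>l. - (\<xi> l * \<mu> l)) has_sum - D) \<Omega>" using has_sum_uminus[where f="\<lambda>l. \<xi> l * \<mu> l" and a="-D" and A=\<Omega>] h1 by simp
  from has_sum_add[OF h2 this] have hs: "((\<lambda>l. \<mu> l + - (\<xi> l * \<mu> l)) has_sum (1 + - D)) \<Omega>" .
  have "(\<lambda>l. \<mu> l + - (\<xi> l * \<mu> l)) l0 = 0"
  proof (rule nonneg_infsum_le_0D[of _ \<Omega>])
    show "infsum (\<lambda>l. \<mu> l + - (\<xi> l * \<mu> l)) \<Omega> \<le> 0" using infsumI[OF hs] D by simp
    show "(\<lambda>l. \<mu> l + - (\<xi> l * \<mu> l)) summable_on \<Omega>" using hs summable_on_def by blast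
    fix x assume "x \<in> \<Omega>"
    then have "\<xi> x * \<mu> x \<le> 1 * \<mu> x" using b nn by (intro mult_right_mono) auto
    then show "0 \<le> \<mu> x + - (\<xi> x * \<mu> x)" by simp
  qed (rule l0)
  then have "(1 - \<xi> l0) * \<mu> l0 = 0" by (simp add: algebra_simps)
  then show ?thesis using l0 by simp
qed

lemma sum_list_ne0_ex:
  "(\<Sum>(c, q)\<leftarrow>cs. (c::real) * f q) \<noteq> 0 \<Longrightarrow> \<exists>(c, q)\<in>set cs. f q \<noteq> 0"
  by (induction cs) auto

lemma sum_list_member_le:
  fixes f :: "'q \<Rightarrow> real"
  assumes "(c, q) \<in> set cs" "\<And>c q. (c, q) \<in> set cs \<Longrightarrow> 0 \<le> c * f q"
  shows "c * f q \<le> (\<Sum>(c, q)\<leftarrow>cs. c * f q)"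
  using assms
proof (induction cs)
  case Nil then show ?case by simp
next
  case (Cons a cs)
  obtain c' q' where a: "a = (c', q')" by fastforce
  have nn: "0 \<le> (\<Sum>(c, q)\<leftarrow>cs. c * f q)"
    using Cons.prems(2) by (intro sum_list_nonneg) auto
  show ?case
  proof (cases "(c, q) = a")
    case True then show ?thesis using nn a by simp
  next
    case False
    then have "c * f q \<le> (\<Sum>(c, q)\<leftarrow>cs. c * f q)" using Cons by auto
    moreover have "0 \<le> c' * f q'" using Cons.prems(2) a by auto
    ultimately show ?thesis using a by simp
  qed
qed

lemma sum_list_const:
  "(\<Sum>(c, q)\<leftarrow>cs. (c::real) * a) = sum_list (map fst cs) * a"
  by (induction cs) (auto simp: algebra_simps)

lemma sum_list_if:
  "(if P then (\<Sum>(c, q)\<leftarrow>cs. (c::real) * g q) else 0) = (\<Sum>(c, q)\<leftarrow>cs. c * (if P then g q else 0))"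
  by (induction cs) auto

lemma has_sum_sum_list:
  fixes f :: "'q \<Rightarrow> 'l \<Rightarrow> real"
  assumes "\<And>c q. (c, q) \<in> set cs \<Longrightarrow> (f q has_sum a q) A"
  shows "((\<lambda>l. \<Sum>(c, q)\<leftarrow>cs. c * f q l) has_sum (\<Sum>(c, q)\<leftarrow>cs. c * a q)) A"
  using assms
proof (induction cs)
  case Nil then show ?case by simp
next
  case (Cons p cs)
  obtain c q where p: "p = (c, q)" by fastforce
  have "((\<lambda>l. c * f q l) has_sum (c * a q)) A" using Cons.prems p by (intro has_sum_cmult_right) auto
  moreover have "((\<lambda>l. \<Sum>(c, q)\<leftarrow>cs. c * f q l) has_sum (\<Sum>(c, q)\<leftarrow>cs. c * a q)) A"
    by (rule Cons.IH) (use Cons.prems in auto)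
  ultimately show ?case using p has_sum_add by fastforce
qed

lemma PiE_eq_diff:
  assumes "m \<rightarrow>\<^sub>E Ob = m' \<rightarrow>\<^sub>E Ob" "m \<noteq> m'" "f \<in> m \<rightarrow>\<^sub>E Ob" "g \<in> m \<rightarrow>\<^sub>E Ob"
  shows "f = g"
proof -
  have "Ob \<subseteq> {undefined}"
  proof
    fix v assume v: "v \<in> Ob"
    obtain x where x: "x \<in> m - m' \<or> x \<in> m' - m" using assms(2) by blast
    then show "v \<in> {undefined}"
    proof
      assume x1: "x \<in> m - m'"
      have "f(x := v) \<in> m \<rightarrow>\<^sub>E Ob" using assms(3) v x1 by (auto simp: PiE_def extensional_def)
      then have "f(x := v) \<in> m' \<rightarrow>\<^sub>E Ob" using assms(1) by simp
      then show ?thesis using x1 by (metis DiffD2 PiE_arb fun_upd_same singletonI)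
    next
      assume x2: "x \<in> m' - m"
      have "f \<in> m' \<rightarrow>\<^sub>E Ob" using assms(1,3) by simp
      then have "f(x := v) \<in> m' \<rightarrow>\<^sub>E Ob" using v x2 by (auto simp: PiE_def extensional_def)
      then have "f(x := v) \<in> m \<rightarrow>\<^sub>E Ob" using assms(1) by simp
      then show ?thesis using x2 by (metis DiffD2 PiE_arb fun_upd_same singletonI)
    qed
  qed
  then have "\<And>h y. h \<in> m \<rightarrow>\<^sub>E Ob \<Longrightarrow> h y = undefined"
    by (metis PiE_arb PiE_mem singletonD subsetD)
  note u = this
  show ?thesis
  proof (rule ext)
    fix y show "f y = g y" using u[OF assms(3)] u[OF assms(4)] by metis
  qed
qed



locale ncr =
  fixes X :: "'x set" and Mc :: "'x set set" and S :: "'s set" and Ob :: "'o set"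
    and sig :: "'s \<Rightarrow> 'x set \<Rightarrow> ('x \<Rightarrow> 'o) \<Rightarrow> real"
    and CP :: "('s \<times> (real \<times> 's) list) set"
    and CM :: "('x set \<times> (real \<times> 'x set) list) set"
    and \<Omega> :: "nat set" and \<mu> :: "'s \<Rightarrow> nat \<Rightarrow> real" and \<xi> :: "'x set \<Rightarrow> nat \<Rightarrow> ('x \<Rightarrow> 'o) \<Rightarrow> real"
    and pmix :: 's
  assumes ET: "empirical_theory X Mc S Ob sig"
    and NS: "no_signalling Mc S Ob sig"
    and CS: "convex_structure S (OpM Mc) (OpO Ob) CP CM"
    and PP: "\<forall>U\<in>OpM Mc. perfectly_predictable S (OpO Ob) (Opd Mc Ob sig) U"
    and MM: "maximally_mixed S (OpM Mc) (OpO Ob) (Opd Mc Ob sig) CP pmix"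
    and O: "ontological_rep S (OpM Mc) (OpO Ob) (Opd Mc Ob sig) \<Omega> \<mu> \<xi>"
    and N: "noncontextual_rep S (OpM Mc) (OpO Ob) (Opd Mc Ob sig) \<Omega> \<mu> \<xi>"
    and V: "preserves_convexity (OpO Ob) CP CM \<Omega> \<mu> \<xi>"
begin

lemma fX: "finite X" "finite Ob" using ET unfolding empirical_theory_def by auto

lemma OpM_X: "U \<in> OpM Mc \<Longrightarrow> U \<subseteq> X" using OpM_sub(1)[OF ET] .

lemma fin_Out: assumes "U \<in> OpM Mc" shows "finite (OpO Ob U)"
proof -
  have "finite U" using OpM_X[OF assms] fX(1) by (rule finite_subset)
  then show ?thesis unfolding OpO_def using fX(2) by (simp add: finite_PiE)
qed

lemma single_OpM: "x \<in> X \<Longrightarrow> {x} \<in> OpM Mc"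
  using ET unfolding empirical_theory_def OpM_def by auto

lemma mu_nn: "p \<in> S \<Longrightarrow> 0 \<le> \<mu> p l" using O unfolding ontological_rep_def by blast
lemma mu_sum: "p \<in> S \<Longrightarrow> (\<mu> p has_sum 1) \<Omega>" using O unfolding ontological_rep_def by blast
lemma xi_nn: "U \<in> OpM Mc \<Longrightarrow> l \<in> \<Omega> \<Longrightarrow> 0 \<le> \<xi> U l k" using O unfolding ontological_rep_def by blast
lemma xi_out: "U \<in> OpM Mc \<Longrightarrow> l \<in> \<Omega> \<Longrightarrow> k \<notin> OpO Ob U \<Longrightarrow> \<xi> U l k = 0" using O unfolding ontological_rep_def by blast
lemma xi_sum: "U \<in> OpM Mc \<Longrightarrow> l \<in> \<Omega> \<Longrightarrow> sum (\<xi> U l) (OpO Ob U) = 1" using O unfolding ontological_rep_def by blast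
lemma xi_d: "p \<in> S \<Longrightarrow> U \<in> OpM Mc \<Longrightarrow> k \<in> OpO Ob U \<Longrightarrow> ((\<lambda>l. \<xi> U l k * \<mu> p l) has_sum Opd Mc Ob sig p U k) \<Omega>"
  using O unfolding ontological_rep_def by blast

lemma xi_le1: assumes "U \<in> OpM Mc" "l \<in> \<Omega>" shows "\<xi> U l k \<le> 1"
proof (cases "k \<in> OpO Ob U")
  case True
  have "\<xi> U l k \<le> sum (\<xi> U l) (OpO Ob U)"
    by (rule member_le_sum[OF True]) (use xi_nn[OF assms] fin_Out[OF assms(1)] in auto)
  then show ?thesis using xi_sum[OF assms] by simp
qed (simp add: xi_out[OF assms])

lemma pmix_S: "pmix \<in> S" using MM unfolding maximally_mixed_def by blast

lemma CP_facts: assumes "(p, cs) \<in> CP" shows "p \<in> S" "\<And>c q. (c, q) \<in> set cs \<Longrightarrow> 0 < c \<and> q \<in> S"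
  "\<And>l. \<mu> p l = (\<Sum>(c, q)\<leftarrow>cs. c * \<mu> q l)"
  using assms CS V unfolding convex_structure_def preserves_convexity_def by fastforce+

lemma full_support:
  assumes "l \<in> \<Omega>" shows "0 < \<mu> pmix l"
proof -
  obtain p where p: "p \<in> S" "0 < \<mu> p l" using O assms unfolding ontological_rep_def by blast
  obtain p0 cs where pc: "(p0, cs) \<in> CP" "prep_equiv S (OpM Mc) (OpO Ob) (Opd Mc Ob sig) pmix p0"
    "p \<in> snd ` set cs"
    using MM p(1) unfolding maximally_mixed_def by fastforce
  have "\<mu> pmix = \<mu> p0" using N pc(2) pmix_S CP_facts(1)[OF pc(1)] unfolding noncontextual_rep_def by blast
  obtain c where c: "(c, p) \<in> set cs" using pc(3) by force
  have "c * \<mu> p l \<le> (\<Sum>(c, q)\<leftarrow>cs. c * \<mu> q l)"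
  proof (rule sum_list_member_le[OF c])
    fix c' q' assume "(c', q') \<in> set cs"
    then have "0 < c'" "q' \<in> S" using CP_facts(2)[OF pc(1)] by auto
    then show "0 \<le> c' * \<mu> q' l" using mu_nn by simp
  qed
  moreover have "0 < c * \<mu> p l" using CP_facts(2)[OF pc(1) c] p by simp
  ultimately show ?thesis using \<open>\<mu> pmix = \<mu> p0\<close> CP_facts(3)[OF pc(1)] by simp
qed

lemma prepares_one:
  assumes "q \<in> S" "U \<in> OpM Mc" "k \<in> OpO Ob U" "Opd Mc Ob sig q U k \<ge> 1" "l \<in> \<Omega>" "0 < \<mu> q l"
  shows "\<xi> U l k = 1"
  by (rule support_one[OF xi_d[OF assms(1-3)] assms(4) mu_sum[OF assms(1)]])
     (use xi_le1[OF assms(2)] mu_nn[OF assms(1)] assms(5,6) in auto)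

lemma determ:
  assumes "U \<in> OpM Mc" "l \<in> \<Omega>"
  shows "\<exists>q\<in>S. \<exists>k\<in>OpO Ob U. prepares_outcome (OpO Ob) (Opd Mc Ob sig) U k q \<and> 0 < \<mu> q l \<and> \<xi> U l k = 1"
proof -
  have pp: "perfectly_predictable S (OpO Ob) (Opd Mc Ob sig) U" using PP assms(1) by blast
  obtain p0 cs where pc: "(p0, cs) \<in> CP" "prep_equiv S (OpM Mc) (OpO Ob) (Opd Mc Ob sig) pmix p0"
    "\<And>c q. (c, q) \<in> set cs \<Longrightarrow> \<exists>k\<in>OpO Ob U. prepares_outcome (OpO Ob) (Opd Mc Ob sig) U k q"
    using MM assms(1) pp unfolding maximally_mixed_def by fastforce
  have "\<mu> pmix = \<mu> p0" using N pc(2) pmix_S CP_facts(1)[OF pc(1)] unfolding noncontextual_rep_def by blast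
  then have "(\<Sum>(c, q)\<leftarrow>cs. c * \<mu> q l) \<noteq> 0" using full_support[OF assms(2)] CP_facts(3)[OF pc(1)] by simp
  then obtain c q where cq: "(c, q) \<in> set cs" "\<mu> q l \<noteq> 0" using sum_list_ne0_ex by fastforce
  have qS: "q \<in> S" using CP_facts(2)[OF pc(1) cq(1)] by blast
  then have qpos: "0 < \<mu> q l" using cq(2) mu_nn[OF qS, of l] by simp
  obtain k where k: "k \<in> OpO Ob U" "prepares_outcome (OpO Ob) (Opd Mc Ob sig) U k q" using pc(3)[OF cq(1)] by blast
  have "Opd Mc Ob sig q U k = 1" using k unfolding prepares_outcome_def by simp
  then have "\<xi> U l k = 1" using prepares_one[OF qS assms(1) k(1) _ assms(2) qpos] by simp
  then show ?thesis using qS k qpos by blast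
qed

lemma uniq:
  assumes "U \<in> OpM Mc" "l \<in> \<Omega>" "k \<in> OpO Ob U" "k' \<in> OpO Ob U" "\<xi> U l k = 1" "k' \<noteq> k"
  shows "\<xi> U l k' = 0"
proof -
  have "sum (\<xi> U l) {k, k'} \<le> sum (\<xi> U l) (OpO Ob U)"
    by (rule sum_mono2[OF fin_Out[OF assms(1)]]) (use assms xi_nn in auto)
  then have "\<xi> U l k + \<xi> U l k' \<le> 1" using xi_sum[OF assms(1,2)] assms(6) by simp
  then show ?thesis using assms(5) xi_nn[OF assms(1,2), of k'] by simp
qed

lemma cons:
  assumes "U \<in> OpM Mc" "W \<in> OpM Mc" "W \<subseteq> U" "l \<in> \<Omega>" "k \<in> OpO Ob U" "\<xi> U l k = 1"
  shows "\<xi> W l (restrict k W) = 1"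
proof -
  obtain q k' where q: "q \<in> S" "k' \<in> OpO Ob U" "prepares_outcome (OpO Ob) (Opd Mc Ob sig) U k' q"
    "0 < \<mu> q l" "\<xi> U l k' = 1"
    using determ[OF assms(1,4)] by blast
  have "k' = k" using uniq[OF assms(1,4,5) q(2) assms(6)] q(5) by fastforce
  obtain C0 where C0: "C0 \<in> Mc" "U \<subseteq> C0" using assms(1) unfolding OpM_def by auto
  have "Opd Mc Ob sig q W (restrict k W) = marg Ob U (sigU Mc Ob sig q U) W (restrict k W)"
    unfolding Opd_def by (rule sigU_marg[OF ET NS q(1) assms(3) C0])
  also have "\<dots> = (\<Sum>s\<in>{s \<in> OpO Ob U. restrict s W = restrict k W}. if k = s then 1 else 0)"
    unfolding marg_def OpO_def[symmetric]
    by (rule sum.cong) (use q(3) \<open>k' = k\<close> in \<open>auto simp: prepares_outcome_def Opd_def\<close>)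
  also have "\<dots> = 1"
    using assms(5) fin_Out[OF assms(1)] by (simp add: sum.delta)
  finally have d1: "Opd Mc Ob sig q W (restrict k W) = 1" .
  have "restrict k W \<in> OpO Ob W" using assms(3,5) unfolding OpO_def by auto
  then show ?thesis using prepares_one[OF q(1) assms(2) _ _ assms(4) q(4)] d1 by simp
qed

end



context ncr begin

definition sl :: "nat \<Rightarrow> 'x \<Rightarrow> 'o" where
  "sl l x = (THE v. v \<in> Ob \<and> \<xi> {x} l (\<lambda>y\<in>{x}. v) = 1)"

definition sv :: "nat \<Rightarrow> 'x \<Rightarrow> 'o" where
  "sv l = restrict (sl l) X"

lemma sl_unique:
  assumes "x \<in> X" "l \<in> \<Omega>" "v \<in> Ob" "\<xi> {x} l (\<lambda>y\<in>{x}. v) = 1" "v' \<in> Ob" "\<xi> {x} l (\<lambda>y\<in>{x}. v') = 1"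
  shows "v = v'"
proof (rule ccontr)
  assume ne: "v \<noteq> v'"
  then have "(\<lambda>y\<in>{x}. v') \<noteq> (\<lambda>y\<in>{x}. v)" by (metis restrict_apply' singletonI)
  moreover have "(\<lambda>y\<in>{x}. v) \<in> OpO Ob {x}" "(\<lambda>y\<in>{x}. v') \<in> OpO Ob {x}" using assms unfolding OpO_def by auto
  ultimately have "\<xi> {x} l (\<lambda>y\<in>{x}. v') = 0" using uniq[OF single_OpM[OF assms(1)] assms(2)] assms(4) by blast
  then show False using assms(6) by simp
qed

lemma sl_prop:
  assumes "x \<in> X" "l \<in> \<Omega>"
  shows "sl l x \<in> Ob" "\<xi> {x} l (\<lambda>y\<in>{x}. sl l x) = 1"
proof -
  obtain q k where k: "k \<in> OpO Ob {x}" "\<xi> {x} l k = 1" using determ[OF single_OpM[OF assms(1)] assms(2)] by blast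
  have kx: "k = (\<lambda>y\<in>{x}. k x)" using k(1) unfolding OpO_def by (auto simp: PiE_def extensional_def)
  have kO: "k x \<in> Ob" using k(1) unfolding OpO_def by auto
  have ex: "k x \<in> Ob \<and> \<xi> {x} l (\<lambda>y\<in>{x}. k x) = 1" using kO k(2) kx by metis
  have "sl l x = k x" unfolding sl_def
  proof (rule the_equality)
    show "k x \<in> Ob \<and> \<xi> {x} l (\<lambda>y\<in>{x}. k x) = 1" by (rule ex)
    fix v assume "v \<in> Ob \<and> \<xi> {x} l (\<lambda>y\<in>{x}. v) = 1"
    then show "v = k x" using sl_unique[OF assms] ex by blast
  qed
  then show "sl l x \<in> Ob" "\<xi> {x} l (\<lambda>y\<in>{x}. sl l x) = 1" using ex by auto
qed

lemma sv_in: "l \<in> \<Omega> \<Longrightarrow> sv l \<in> X \<rightarrow>\<^sub>E Ob"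
  unfolding sv_def using sl_prop(1) by auto

lemma Fkey:
  assumes "U \<in> OpM Mc" "l \<in> \<Omega>"
  shows "\<xi> U l (restrict (sv l) U) = 1"
proof -
  obtain q k where k: "k \<in> OpO Ob U" "\<xi> U l k = 1" using determ[OF assms] by blast
  have UX: "U \<subseteq> X" using OpM_X[OF assms(1)] .
  have "restrict (sv l) U = k"
  proof (rule ext)
    fix x show "restrict (sv l) U x = k x"
    proof (cases "x \<in> U")
      case True
      have xX: "x \<in> X" using UX True by auto
      have xs: "{x} \<in> OpM Mc" "{x} \<subseteq> U" using single_OpM[OF xX] True by auto
      have "\<xi> {x} l (restrict k {x}) = 1" by (rule cons[OF assms(1) xs assms(2) k])
      moreover have "restrict k {x} = (\<lambda>y\<in>{x}. k x)" by (auto simp: restrict_def)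
      ultimately have "\<xi> {x} l (\<lambda>y\<in>{x}. k x) = 1" by simp
      moreover have "k x \<in> Ob" using k(1) True unfolding OpO_def by auto
      ultimately have "k x = sl l x" using sl_unique[OF xX assms(2)] sl_prop[OF xX assms(2)] by blast
      then show ?thesis using True xX unfolding sv_def by simp
    next
      case False then show ?thesis using k(1) unfolding OpO_def by (simp add: PiE_arb[of k])
    qed
  qed
  then show ?thesis using k(2) by simp
qed

lemma F2:
  assumes "U \<in> OpM Mc" "l \<in> \<Omega>"
  shows "\<xi> U l k = (if k = restrict (sv l) U then 1 else 0)"
proof -
  have r: "restrict (sv l) U \<in> OpO Ob U" using sv_in[OF assms(2)] OpM_X[OF assms(1)] unfolding OpO_def by auto
  show ?thesis
  proof (cases "k = restrict (sv l) U")
    case True then show ?thesis using Fkey[OF assms] by simp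
  next
    case False
    show ?thesis
    proof (cases "k \<in> OpO Ob U")
      case True
      then show ?thesis using uniq[OF assms r True Fkey[OF assms]] False by simp
    next
      case False' : False
      then show ?thesis using xi_out[OF assms] False by simp
    qed
  qed
qed

definition dg :: "'s \<Rightarrow> ('x \<Rightarrow> 'o) \<Rightarrow> real" where
  "dg \<sigma> s = infsum (\<lambda>l. if sv l = s then \<mu> \<sigma> l else 0) \<Omega>"

lemma ind_summable:
  assumes "\<sigma> \<in> S" shows "(\<lambda>l. if P l then \<mu> \<sigma> l else 0) summable_on \<Omega>"
  by (rule summable_on_comparison_test[of "\<mu> \<sigma>"]) (use mu_sum[OF assms] summable_on_def mu_nn[OF assms] in auto)

lemma dg_has_sum:
  assumes "\<sigma> \<in> S" shows "((\<lambda>l. if sv l = s then \<mu> \<sigma> l else 0) has_sum dg \<sigma> s) \<Omega>"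
  unfolding dg_def using ind_summable[OF assms] by (simp add: summable_iff_has_sum_infsum[symmetric])

lemma dg_nn: "\<sigma> \<in> S \<Longrightarrow> 0 \<le> dg \<sigma> s"
  unfolding dg_def by (rule infsum_nonneg) (use mu_nn in auto)

lemma dg_sum:
  assumes "\<sigma> \<in> S" "finite T"
  shows "((\<lambda>l. if sv l \<in> T \<and> Q (sv l) then \<mu> \<sigma> l else 0) has_sum (\<Sum>s\<in>T. if Q s then dg \<sigma> s else 0)) \<Omega>"
proof -
  have "((\<lambda>l. \<Sum>s\<in>T. if Q s then (if sv l = s then \<mu> \<sigma> l else 0) else 0) has_sum (\<Sum>s\<in>T. if Q s then dg \<sigma> s else 0)) \<Omega>"
    by (rule has_sum_sum_fin[OF assms(2)]) (use dg_has_sum[OF assms(1)] in auto)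
  moreover have "\<And>l. (\<Sum>s\<in>T. if Q s then (if sv l = s then \<mu> \<sigma> l else 0) else 0)
      = (if sv l \<in> T \<and> Q (sv l) then \<mu> \<sigma> l else 0)"
  proof -
    fix l
    have "(\<Sum>s\<in>T. if Q s then (if sv l = s then \<mu> \<sigma> l else 0) else 0)
        = (\<Sum>s\<in>T. if sv l = s then (if Q s then \<mu> \<sigma> l else 0) else 0)"
      by (rule sum.cong) auto
    also have "\<dots> = (if sv l \<in> T \<and> Q (sv l) then \<mu> \<sigma> l else 0)"
      using assms(2) by (simp add: sum.delta)
    finally show "(\<Sum>s\<in>T. if Q s then (if sv l = s then \<mu> \<sigma> l else 0) else 0)
      = (if sv l \<in> T \<and> Q (sv l) then \<mu> \<sigma> l else 0)" .
  qed
  ultimately show ?thesis by simp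
qed

lemma dg_zero:
  assumes "\<And>l. l \<in> \<Omega> \<Longrightarrow> sv l \<noteq> s"
  shows "dg \<sigma> s = 0"
  unfolding dg_def by (rule infsum_0) (use assms in auto)

end



lemma sum_list_zero: "(\<Sum>(c, q)\<leftarrow>cs. (0::real)) = 0"
  by (induction cs) auto

context ncr begin

lemma gs: "global_section X Mc S Ob sig dg"
  unfolding global_section_def
proof (rule ballI, rule conjI)
  fix \<sigma> assume s: "\<sigma> \<in> S"
  have fP: "finite (X \<rightarrow>\<^sub>E Ob)" using fX by (simp add: finite_PiE)
  show "is_distribution_on (dg \<sigma>) (X \<rightarrow>\<^sub>E Ob)"
    unfolding is_distribution_on_def
  proof (intro conjI allI impI)
    fix a show "0 \<le> dg \<sigma> a" using dg_nn[OF s] .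
  next
    fix a assume "a \<notin> X \<rightarrow>\<^sub>E Ob" then show "dg \<sigma> a = 0" using sv_in by (intro dg_zero) auto
  next
    have h: "((\<lambda>l. if sv l \<in> X \<rightarrow>\<^sub>E Ob \<and> True then \<mu> \<sigma> l else 0) has_sum (\<Sum>s\<in>X \<rightarrow>\<^sub>E Ob. if True then dg \<sigma> s else 0)) \<Omega>"
      by (rule dg_sum[OF s fP])
    have "((\<lambda>l. if sv l \<in> X \<rightarrow>\<^sub>E Ob \<and> True then \<mu> \<sigma> l else 0) has_sum 1) \<Omega>"
      using mu_sum[OF s] by (rule has_sum_cong[THEN iffD2, rotated]) (use sv_in in auto)
    then show "sum (dg \<sigma>) (X \<rightarrow>\<^sub>E Ob) = 1" using has_sum_unique[OF h] by simp
  qed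
  show "\<forall>C\<in>Mc. \<forall>t\<in>C \<rightarrow>\<^sub>E Ob. marg Ob X (dg \<sigma>) C t = sig \<sigma> C t"
  proof (intro ballI)
    fix C t assume C: "C \<in> Mc" and t: "t \<in> C \<rightarrow>\<^sub>E Ob"
    have h: "((\<lambda>l. if sv l \<in> X \<rightarrow>\<^sub>E Ob \<and> restrict (sv l) C = t then \<mu> \<sigma> l else 0) has_sum
         (\<Sum>s\<in>X \<rightarrow>\<^sub>E Ob. if restrict s C = t then dg \<sigma> s else 0)) \<Omega>"
      by (rule dg_sum[OF s fP])
    have m: "marg Ob X (dg \<sigma>) C t = (\<Sum>s\<in>X \<rightarrow>\<^sub>E Ob. if restrict s C = t then dg \<sigma> s else 0)"
      unfolding marg_def using fP by (simp add: sum.inter_filter[symmetric])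
    show "marg Ob X (dg \<sigma>) C t = sig \<sigma> C t"
    proof (cases "C = {}")
      case True
      have t0: "t = (\<lambda>x. undefined)" using t True by simp
      have "((\<lambda>l. if sv l \<in> X \<rightarrow>\<^sub>E Ob \<and> restrict (sv l) C = t then \<mu> \<sigma> l else 0) has_sum 1) \<Omega>"
        using mu_sum[OF s] by (rule has_sum_cong[THEN iffD2, rotated]) (use sv_in True t0 in auto)
      then have "marg Ob X (dg \<sigma>) C t = 1" using has_sum_unique[OF h] m by simp
      moreover have "sum (sig \<sigma> C) (C \<rightarrow>\<^sub>E Ob) = 1" using ET s C unfolding empirical_theory_def is_distribution_on_def by blast
      ultimately show ?thesis using True t0 by simp
    next
      case False
      then have CM: "C \<in> OpM Mc" using C unfolding OpM_def by auto
      have xd: "((\<lambda>l. \<xi> C l t * \<mu> \<sigma> l) has_sum Opd Mc Ob sig \<sigma> C t) \<Omega>"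
        using xi_d[OF s CM, of t] t unfolding OpO_def by blast
      have "((\<lambda>l. if sv l \<in> X \<rightarrow>\<^sub>E Ob \<and> restrict (sv l) C = t then \<mu> \<sigma> l else 0) has_sum Opd Mc Ob sig \<sigma> C t) \<Omega>"
        using xd by (rule has_sum_cong[THEN iffD1, rotated]) (use sv_in F2[OF CM] in auto)
      then have "marg Ob X (dg \<sigma>) C t = Opd Mc Ob sig \<sigma> C t" using has_sum_unique[OF h] m by simp
      then show ?thesis unfolding Opd_def using sigU_context[OF ET C t] by simp
    qed
  qed
qed

lemma se_pe:
  assumes "state_equiv Mc Ob sig \<sigma> \<sigma>'"
  shows "prep_equiv S (OpM Mc) (OpO Ob) (Opd Mc Ob sig) \<sigma> \<sigma>'"
  unfolding prep_equiv_def
proof (intro ballI)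
  fix U k assume U: "U \<in> OpM Mc" and "k \<in> OpO Ob U"
  obtain C0 where C0: "C0 \<in> Mc" "U \<subseteq> C0" using U unfolding OpM_def by auto
  define CU where "CU = (SOME C. C \<in> Mc \<and> U \<subseteq> C)"
  have hU: "CU \<in> Mc" using sigU_some[OF C0] unfolding CU_def by auto
  have "marg Ob CU (sig \<sigma> CU) U k = marg Ob CU (sig \<sigma>' CU) U k"
    unfolding marg_def by (rule sum.cong) (use assms hU in \<open>auto simp: state_equiv_def\<close>)
  then show "Opd Mc Ob sig \<sigma> U k = Opd Mc Ob sig \<sigma>' U k"
    unfolding Opd_def sigU_def Let_def CU_def by simp
qed

lemma pe_mu:
  assumes "\<sigma> \<in> S" "\<sigma>' \<in> S" "prep_equiv S (OpM Mc) (OpO Ob) (Opd Mc Ob sig) \<sigma> \<sigma>'"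
  shows "\<mu> \<sigma> = \<mu> \<sigma>'" "dg \<sigma> = dg \<sigma>'"
proof -
  show "\<mu> \<sigma> = \<mu> \<sigma>'" using N assms unfolding noncontextual_rep_def by blast
  note e = this
  show "dg \<sigma> = dg \<sigma>'"
  proof (rule ext)
    fix s show "dg \<sigma> s = dg \<sigma>' s" unfolding dg_def e ..
  qed
qed

lemma adm: "canonical_admissible X Mc S Ob sig dg"
  unfolding canonical_admissible_def
proof (intro conjI ballI allI impI)
  show "global_section X Mc S Ob sig dg" by (rule gs)
next
  fix \<sigma> and s :: "'x \<Rightarrow> 'o" and x x' assume s: "\<sigma> \<in> S" and x: "x \<in> X" "x' \<in> X"
    and h: "label_equiv Mc S Ob sig x x' \<and> s x \<noteq> s x'"
  show "dg \<sigma> s = 0"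
  proof (rule dg_zero)
    fix l assume l: "l \<in> \<Omega>"
    let ?v = "sl l x"
    have vO: "?v \<in> Ob" using sl_prop[OF x(1) l] by simp
    have ee: "effect_equiv S (OpM Mc) (OpO Ob) (Opd Mc Ob sig) {x} (\<lambda>y\<in>{x}. ?v) {x'} (\<lambda>y\<in>{x'}. ?v)"
      using h vO unfolding effect_equiv_def label_equiv_def Opd_def by blast
    have "\<xi> {x} l (\<lambda>y\<in>{x}. ?v) = \<xi> {x'} l (\<lambda>y\<in>{x'}. ?v)"
      using N ee single_OpM[OF x(1)] single_OpM[OF x(2)] vO l unfolding noncontextual_rep_def OpO_def by auto
    then have "\<xi> {x'} l (\<lambda>y\<in>{x'}. ?v) = 1" using sl_prop[OF x(1) l] by simp
    then have "?v = sl l x'" using sl_unique[OF x(2) l vO] sl_prop[OF x(2) l] by blast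
    then show "sv l \<noteq> s" using h x unfolding sv_def by auto
  qed
next
  fix \<sigma> \<sigma>' assume "\<sigma> \<in> S" "\<sigma>' \<in> S" "state_equiv Mc Ob sig \<sigma> \<sigma>'"
  then show "dg \<sigma> = dg \<sigma>'" using pe_mu(2) se_pe by blast
qed

lemma canOm_sv:
  assumes "t \<in> can_Omega X Mc S Ob sig dg"
  obtains l where "l \<in> \<Omega>" "sv l = lift_ontic X Mc S Ob sig t X"
proof -
  obtain \<sigma> where "\<sigma> \<in> S" "0 < dg \<sigma> (lift_ontic X Mc S Ob sig t X)" using assms unfolding can_Omega_def by blast
  then have "\<exists>l\<in>\<Omega>. sv l = lift_ontic X Mc S Ob sig t X" using dg_zero by fastforce
  then show ?thesis using that by blast
qed

lemma can_nc:
  "noncontextual_rep S (OpM Mc) (OpO Ob) (Opd Mc Ob sig) (can_Omega X Mc S Ob sig dg)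
     (can_mu X Mc S Ob sig dg) (can_xi X Mc S Ob sig)"
  unfolding noncontextual_rep_def
proof (intro conjI ballI impI)
  fix p p' assume "p \<in> S" "p' \<in> S" "prep_equiv S (OpM Mc) (OpO Ob) (Opd Mc Ob sig) p p'"
  then have "dg p = dg p'" by (rule pe_mu(2))
  then show "can_mu X Mc S Ob sig dg p = can_mu X Mc S Ob sig dg p'" unfolding can_mu_def by (subst (asm) fun_eq_iff) auto
next
  fix m k m' k' t assume m: "m \<in> OpM Mc" "k \<in> OpO Ob m" and m': "m' \<in> OpM Mc" "k' \<in> OpO Ob m'"
    and ee: "effect_equiv S (OpM Mc) (OpO Ob) (Opd Mc Ob sig) m k m' k'"
    and t: "t \<in> can_Omega X Mc S Ob sig dg"
  obtain l where l: "l \<in> \<Omega>" "sv l = lift_ontic X Mc S Ob sig t X" using canOm_sv[OF t] by blast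
  have e1: "can_xi X Mc S Ob sig m t k = \<xi> m l k"
    unfolding can_xi_def F2[OF m(1) l(1)] lift_restrict[OF OpM_X[OF m(1)]] l(2) by simp
  have e2: "can_xi X Mc S Ob sig m' t k' = \<xi> m' l k'"
    unfolding can_xi_def F2[OF m'(1) l(1)] lift_restrict[OF OpM_X[OF m'(1)]] l(2) by simp
  have "\<xi> m l k = \<xi> m' l k'" using N m m' ee l(1) unfolding noncontextual_rep_def by blast
  then show "can_xi X Mc S Ob sig m t k = can_xi X Mc S Ob sig m' t k'" using e1 e2 by simp
qed

lemma can_conv:
  "preserves_convexity (OpO Ob) CP CM (can_Omega X Mc S Ob sig dg)
     (can_mu X Mc S Ob sig dg) (can_xi X Mc S Ob sig)"
  unfolding preserves_convexity_def
proof (intro conjI)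
  show "\<forall>(p, cs)\<in>CP. \<forall>t. can_mu X Mc S Ob sig dg p t = (\<Sum>(c, q)\<leftarrow>cs. c * can_mu X Mc S Ob sig dg q t)"
  proof (intro ballI)
    fix pc assume pc: "pc \<in> CP"
    obtain p cs where pcs: "pc = (p, cs)" by fastforce
    have pc': "(p, cs) \<in> CP" using pc pcs by simp
    show "case pc of (p, cs) \<Rightarrow> \<forall>t. can_mu X Mc S Ob sig dg p t = (\<Sum>(c, q)\<leftarrow>cs. c * can_mu X Mc S Ob sig dg q t)"
      unfolding pcs prod.case
    proof (intro allI)
      fix t
      let ?s = "lift_ontic X Mc S Ob sig t X"
      have "dg p ?s = (\<Sum>(c, q)\<leftarrow>cs. c * dg q ?s)"
      proof -
        have h1: "((\<lambda>l. \<Sum>(c, q)\<leftarrow>cs. c * (if sv l = ?s then \<mu> q l else 0)) has_sum (\<Sum>(c, q)\<leftarrow>cs. c * dg q ?s)) \<Omega>"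
          by (rule has_sum_sum_list) (use dg_has_sum CP_facts(2)[OF pc'] in blast)
        have "((\<lambda>l. \<Sum>(c, q)\<leftarrow>cs. c * (if sv l = ?s then \<mu> q l else 0)) has_sum dg p ?s) \<Omega>"
          using dg_has_sum[OF CP_facts(1)[OF pc'], of ?s]
          by (rule has_sum_cong[THEN iffD1, rotated]) (simp add: CP_facts(3)[OF pc'] sum_list_if sum_list_zero)
        then show ?thesis using has_sum_unique[OF h1] by simp
      qed
      then show "can_mu X Mc S Ob sig dg p t = (\<Sum>(c, q)\<leftarrow>cs. c * can_mu X Mc S Ob sig dg q t)"
        unfolding can_mu_def by (simp add: sum_list_if sum_list_zero)
    qed
  qed
  show "\<forall>(m, cs)\<in>CM. \<forall>t\<in>can_Omega X Mc S Ob sig dg. \<forall>k\<in>OpO Ob m.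
      can_xi X Mc S Ob sig m t k = (\<Sum>(c, m')\<leftarrow>cs. c * can_xi X Mc S Ob sig m' t k)"
  proof (intro ballI)
    fix mc assume mc: "mc \<in> CM"
    obtain m cs where mcs: "mc = (m, cs)" by fastforce
    have cs1: "m \<in> OpM Mc" "sum_list (map fst cs) = 1"
      "\<And>c m'. (c, m') \<in> set cs \<Longrightarrow> m' \<in> OpM Mc \<and> OpO Ob m' = OpO Ob m"
      using CS mc mcs unfolding convex_structure_def by fastforce+
    show "case mc of (m, cs) \<Rightarrow> \<forall>t\<in>can_Omega X Mc S Ob sig dg. \<forall>k\<in>OpO Ob m.
      can_xi X Mc S Ob sig m t k = (\<Sum>(c, m')\<leftarrow>cs. c * can_xi X Mc S Ob sig m' t k)"
      unfolding mcs prod.case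
    proof (intro ballI)
      fix t k assume t: "t \<in> can_Omega X Mc S Ob sig dg" and k: "k \<in> OpO Ob m"
      have tP: "t \<in> X // label_rel X Mc S Ob sig \<rightarrow>\<^sub>E Ob" using t unfolding can_Omega_def by blast
      have eq: "\<And>c m'. (c, m') \<in> set cs \<Longrightarrow> can_xi X Mc S Ob sig m' t k = can_xi X Mc S Ob sig m t k"
      proof -
        fix c m' assume cm: "(c, m') \<in> set cs"
        show "can_xi X Mc S Ob sig m' t k = can_xi X Mc S Ob sig m t k"
        proof (cases "m' = m")
          case False
          have O': "m' \<rightarrow>\<^sub>E Ob = m \<rightarrow>\<^sub>E Ob" "m' \<in> OpM Mc" using cs1(3)[OF cm] unfolding OpO_def by auto
          have a: "lift_ontic X Mc S Ob sig t m' \<in> m' \<rightarrow>\<^sub>E Ob" by (rule lift_in[OF tP OpM_X[OF O'(2)]])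
          have b: "lift_ontic X Mc S Ob sig t m \<in> m' \<rightarrow>\<^sub>E Ob"
            using lift_in[OF tP OpM_X[OF cs1(1)]] O'(1) by simp
          have c: "k \<in> m' \<rightarrow>\<^sub>E Ob" using k O'(1) unfolding OpO_def by simp
          have "k = lift_ontic X Mc S Ob sig t m'" by (rule PiE_eq_diff[OF O'(1) False c a])
          moreover have "k = lift_ontic X Mc S Ob sig t m" by (rule PiE_eq_diff[OF O'(1) False c b])
          ultimately show ?thesis unfolding can_xi_def by simp
        qed simp
      qed
      have "(\<Sum>(c, m')\<leftarrow>cs. c * can_xi X Mc S Ob sig m' t k) = (\<Sum>(c, m')\<leftarrow>cs. c * can_xi X Mc S Ob sig m t k)"
        by (rule arg_cong[where f=sum_list], rule map_cong) (use eq in auto)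
      also have "\<dots> = can_xi X Mc S Ob sig m t k" using cs1(2) by (simp add: sum_list_const)
      finally show "can_xi X Mc S Ob sig m t k = (\<Sum>(c, m')\<leftarrow>cs. c * can_xi X Mc S Ob sig m' t k)" by simp
    qed
  qed
qed

lemma admits: "admits_nc_canonical_rep X Mc S Ob sig CP CM"
  unfolding admits_nc_canonical_rep_def Let_def
  using adm can_ont[OF ET adm] can_nc can_conv by blast

end


theorem mainTheorem7:
  fixes X :: "'x set" and Mc :: "'x set set" and S :: "'s set" and Ob :: "'o set"
    and sig :: "'s \<Rightarrow> 'x set \<Rightarrow> ('x \<Rightarrow> 'o) \<Rightarrow> real"
    and CP :: "('s \<times> (real \<times> 's) list) set"
    and CM :: "('x set \<times> (real \<times> 'x set) list) set"
  assumes "empirical_theory X Mc S Ob sig"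
    and "no_signalling Mc S Ob sig"
    and "convex_structure S (OpM Mc) (OpO Ob) CP CM"
    and "\<forall>U\<in>OpM Mc. perfectly_predictable S (OpO Ob) (Opd Mc Ob sig) U"
    and "\<exists>pmix. maximally_mixed S (OpM Mc) (OpO Ob) (Opd Mc Ob sig) CP pmix"
  shows "noncontextual_convex_theory S (OpM Mc) (OpO Ob) (Opd Mc Ob sig) CP CM
         \<longleftrightarrow> admits_nc_canonical_rep X Mc S Ob sig CP CM"
proof
  assume "noncontextual_convex_theory S (OpM Mc) (OpO Ob) (Opd Mc Ob sig) CP CM"
  then obtain \<Omega> :: "nat set" and \<mu> \<xi> where
    r: "ontological_rep S (OpM Mc) (OpO Ob) (Opd Mc Ob sig) \<Omega> \<mu> \<xi>"
       "noncontextual_rep S (OpM Mc) (OpO Ob) (Opd Mc Ob sig) \<Omega> \<mu> \<xi>"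
       "preserves_convexity (OpO Ob) CP CM \<Omega> \<mu> \<xi>"
    unfolding noncontextual_convex_theory_def by blast
  obtain pmix where pm: "maximally_mixed S (OpM Mc) (OpO Ob) (Opd Mc Ob sig) CP pmix" using assms(5) by blast
  interpret ncr X Mc S Ob sig CP CM \<Omega> \<mu> \<xi> pmix
    using assms(1-4) pm r by unfold_locales
  show "admits_nc_canonical_rep X Mc S Ob sig CP CM" by (rule admits)
next
  assume "admits_nc_canonical_rep X Mc S Ob sig CP CM"
  then obtain dg where
    "ontological_rep S (OpM Mc) (OpO Ob) (Opd Mc Ob sig) (can_Omega X Mc S Ob sig dg) (can_mu X Mc S Ob sig dg) (can_xi X Mc S Ob sig)"
    "noncontextual_rep S (OpM Mc) (OpO Ob) (Opd Mc Ob sig) (can_Omega X Mc S Ob sig dg) (can_mu X Mc S Ob sig dg) (can_xi X Mc S Ob sig)"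
    "preserves_convexity (OpO Ob) CP CM (can_Omega X Mc S Ob sig dg) (can_mu X Mc S Ob sig dg) (can_xi X Mc S Ob sig)"
    unfolding admits_nc_canonical_rep_def Let_def by blast
  then show "noncontextual_convex_theory S (OpM Mc) (OpO Ob) (Opd Mc Ob sig) CP CM"
    by (rule transfer_nat)
qed

end
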